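(* If $\mathbf{h}$ has a fixed point, the modified Jacobi-type iteration corresponding to $\mathbf{x}^{n+1} = \mathbf{h}(\mathbf{x}^n)$ converges in at most $m/b^2$ iterations from any initial guess $\mathbf{x}^0$. ($m$ is the number of nonzero entries in all blocks in the sparsity pattern $S_B$ and $b$ is the block size.)
   Context: Let $\mathbf{A}\in\mathbb{R}^{n\times n}$ be partitioned into square $b\times b$ blocks, and $S_B$ a set of block indices containing all diagonal blocks. The unknowns (entries of the block ILU factors $\mathbf{L}_{ij}$, $i>j$, and $\mathbf{U}_{ij}$, $i\le j$, for $(i,j)\in S_B$) form $\mathbf{x}\in\mathbb{R}^m$, $m=|S_B|b^2$, with $\mathbf{X}_{ij}$ the $b\times b$ block for index $(i,j)$. The map $\mathbf{h}:D_B\to\mathbb{R}^m$ is given blockwise by $\mathbf{H}_{ij}(\mathbf{x})=(\mathbf{A}_{ij}-\sum_{k=1}^{j-1}\mathbf{X}_{ik}\mathbf{X}_{kj})\mathbf{X}_{jj}^{-1}$ for $i>j$ and $\mathbf{H}_{ij}(\mathbf{x})=\mathbf{A}_{ij}-\sum_{k=1}^{i-1}\mathbf{X}_{ik}\mathbf{X}_{kj}$ for $i\le j$, on $D_B:=\{\mathbf{x}: \mathbf{X}_{jj}\text{ nonsingular for all diagonal blocks}\}$. The modified Jacobi-type iteration is the synchronous iteration $\mathbf{x}^{n+1}=\mathbf{h}(\mathbf{x}^n)$ except that whenever a diagonal block $\mathbf{X}_{jj}$ becomes singular, it is replaced by an arbitrary nonsingular matrix. *)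

theory Defs
  imports "HOL-Analysis.Analysis"
begin

text \<open>Block indices are pairs (i,j) with 1 \<le> i,j \<le> N (N = number of block rows).
  A block-ILU unknown vector is a map from block indices to b\<times>b blocks; only its
  values on the pattern S are meaningful.\<close>

type_synonym ('b) blk = "real ^ 'b ^ 'b"

definition blk_at :: "(nat \<times> nat) set \<Rightarrow> (nat \<times> nat \<Rightarrow> 'b::finite blk) \<Rightarrow> nat \<Rightarrow> nat \<Rightarrow> 'b blk" where
  "blk_at S x i j = (if (i, j) \<in> S then x (i, j) else 0)"

definition h_map :: "(nat \<times> nat) set \<Rightarrow> (nat \<Rightarrow> nat \<Rightarrow> 'b::finite blk)
    \<Rightarrow> (nat \<times> nat \<Rightarrow> 'b blk) \<Rightarrow> (nat \<times> nat \<Rightarrow> 'b blk)" where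
  "h_map S A x = (\<lambda>(i, j).
     if j < i then (A i j - (\<Sum>k\<in>{1..<j}. blk_at S x i k ** blk_at S x k j)) ** matrix_inv (x (j, j))
     else A i j - (\<Sum>k\<in>{1..<i}. blk_at S x i k ** blk_at S x k j))"

definition in_DB :: "nat \<Rightarrow> (nat \<times> nat \<Rightarrow> 'b::finite blk) \<Rightarrow> bool" where
  "in_DB N x \<longleftrightarrow> (\<forall>j\<in>{1..N}. invertible (x (j, j)))"

definition diag_repair :: "(nat \<times> nat) set \<Rightarrow> (nat \<times> nat \<Rightarrow> 'b::finite blk) \<Rightarrow> (nat \<times> nat \<Rightarrow> 'b blk) \<Rightarrow> bool" where
  "diag_repair S y z \<longleftrightarrow>
     (\<forall>(i, j)\<in>S. (i \<noteq> j \<longrightarrow> z (i, j) = y (i, j)) \<and>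
        (i = j \<longrightarrow> (if invertible (y (i, i)) then z (i, i) = y (i, i) else invertible (z (i, i)))))"

definition modified_jacobi ::
  "(nat \<times> nat) set \<Rightarrow> (nat \<Rightarrow> nat \<Rightarrow> 'b::finite blk) \<Rightarrow> (nat \<times> nat \<Rightarrow> 'b blk) \<Rightarrow> (nat \<Rightarrow> nat \<times> nat \<Rightarrow> 'b blk) \<Rightarrow> bool" where
  "modified_jacobi S A x0 x \<longleftrightarrow>
     diag_repair S x0 (x 0) \<and> (\<forall>n. diag_repair S (h_map S A (x n)) (x (Suc n)))"

end

theory Submission
  imports Defs
begin

definition mu :: "nat \<times> nat \<Rightarrow> nat" where
  "mu p = (if snd p < fst p then 2 * snd p + 1 else 2 * fst p)"

lemma h_local:
  assumes eq: "\<forall>q\<in>S. mu q < mu (i, j) \<longrightarrow> y q = z q"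
    and dj: "(j, j) \<in> S"
  shows "h_map S A y (i, j) = h_map S A z (i, j)"
proof -
  have b: "blk_at S y a c = blk_at S z a c" if "mu (a, c) < mu (i, j)" for a c
    using eq that by (auto simp: blk_at_def)
  show ?thesis
  proof (cases "j < i")
    case True
    have s: "(\<Sum>k\<in>{1..<j}. blk_at S y i k ** blk_at S y k j) = (\<Sum>k\<in>{1..<j}. blk_at S z i k ** blk_at S z k j)"
      by (rule sum.cong) (use True in \<open>auto intro!: arg_cong2[where f="(**)"] b simp: mu_def\<close>)
    have d: "y (j, j) = z (j, j)" using eq dj True by (auto simp: mu_def)
    show ?thesis using True s d by (simp add: h_map_def)
  next
    case False
    have s: "(\<Sum>k\<in>{1..<i}. blk_at S y i k ** blk_at S y k j) = (\<Sum>k\<in>{1..<i}. blk_at S z i k ** blk_at S z k j)"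
      by (rule sum.cong) (use False in \<open>auto intro!: arg_cong2[where f="(**)"] b simp: mu_def\<close>)
    show ?thesis using False s by (simp add: h_map_def)
  qed
qed

theorem theorem8:
  fixes N :: nat
    and S :: "(nat \<times> nat) set"
    and A :: "nat \<Rightarrow> nat \<Rightarrow> real ^ 'b::finite ^ 'b"
    and x0 xs :: "nat \<times> nat \<Rightarrow> real ^ 'b ^ 'b"
    and x :: "nat \<Rightarrow> nat \<times> nat \<Rightarrow> real ^ 'b ^ 'b"
  assumes S_sub: "S \<subseteq> {1..N} \<times> {1..N}"
    and S_diag: "\<forall>j\<in>{1..N}. (j, j) \<in> S"
    and fp_dom: "in_DB N xs"
    and fp: "\<forall>p\<in>S. h_map S A xs p = xs p"
    and iter: "modified_jacobi S A x0 x"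
  shows "\<forall>n \<ge> card S. \<forall>p\<in>S. x n p = xs p"
proof -
  define rk where "rk p = card {q\<in>S. mu q < mu p}" for p
  have fin: "finite S" using S_sub finite_subset by blast
  have rk_lt: "rk q < rk p" if "q \<in> S" "mu q < mu p" for p q
  proof -
    have "{r\<in>S. mu r < mu q} \<subset> {r\<in>S. mu r < mu p}" using that by auto
    then show ?thesis unfolding rk_def by (intro psubset_card_mono) (use fin in auto)
  qed
  have rk_S: "rk p < card S" if "p \<in> S" for p
  proof -
    have "{r\<in>S. mu r < mu p} \<subset> S" using that by auto
    then show ?thesis unfolding rk_def by (intro psubset_card_mono) (use fin in auto)
  qed
  have main: "\<forall>p\<in>S. rk p < n \<longrightarrow> x n p = xs p" for n
  proof (induction n)
    case 0 then show ?case by simp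
  next
    case (Suc m)
    show ?case
    proof (intro ballI impI)
      fix p assume pS: "p \<in> S" and r: "rk p < Suc m"
      obtain i j where p: "p = (i, j)" by fastforce
      have jN: "j \<in> {1..N}" using S_sub pS p by auto
      have dj: "(j, j) \<in> S" using S_diag jN by auto
      have eq: "\<forall>q\<in>S. mu q < mu (i, j) \<longrightarrow> x m q = xs q"
        using Suc.IH rk_lt r p by fastforce
      have "h_map S A (x m) (i, j) = h_map S A xs (i, j)"
        by (rule h_local[OF eq dj])
      also have "\<dots> = xs (i, j)" using fp pS p by auto
      finally have h: "h_map S A (x m) (i, j) = xs (i, j)" .
      have dr: "diag_repair S (h_map S A (x m)) (x (Suc m))"
        using iter by (simp add: modified_jacobi_def)
      show "x (Suc m) p = xs p"
      proof (cases "i = j")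
        case True
        have "invertible (xs (j, j))" using fp_dom jN by (simp add: in_DB_def)
        then show ?thesis using dr pS p True h unfolding diag_repair_def by fastforce
      next
        case False
        then show ?thesis using dr pS p h unfolding diag_repair_def by fastforce
      qed
    qed
  qed
  show ?thesis using main rk_S by (meson order_less_le_trans)
qed

end
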